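(* For every integer $d\ge3$, the map $\nu\mapsto\vartheta_{d,\nu}$ is strictly increasing, and for every $\nu>0$ the map $d\mapsto\vartheta_{d,\nu}$ is strictly increasing. Moreover, for every $d\ge3$, $$\lim_{\nu\downarrow0}\vartheta_{d,\nu}=\vartheta_{d,0}=\frac{d-2}{d-1},\qquad \lim_{\nu\to\infty}\vartheta_{d,\nu}=1,$$ and for every $\nu>0$, $\lim_{d\to\infty}\vartheta_{d,\nu}=1$.
   Context: For $d\ge2$ and $\nu\in[0,\infty)$ let $\beta_d=\sqrt{d-1}$, $\rho_d=2\sqrt{d-1}/d$, let $\Delta_{d,\nu}$ be the continued fraction $\Delta_{d,\nu}=\cfrac{1}{a_1-\cfrac{1}{a_2-\cfrac{1}{a_3-\cdots}}}$ with $a_i=\frac{2+i\nu}{\rho_d}$ (convergent since $a_i\ge2$), and define $\vartheta_{d,\nu}=1-\Delta_{d,\nu}/\beta_d$. *)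

theory Defs
  imports "HOL-Analysis.Analysis"
begin

definition beta_d :: "nat \<Rightarrow> real" where
  "beta_d d = sqrt (real d - 1)"

definition rho_d :: "nat \<Rightarrow> real" where
  "rho_d d = 2 * sqrt (real d - 1) / real d"

definition cf_coeff :: "nat \<Rightarrow> real \<Rightarrow> nat \<Rightarrow> real" where
  "cf_coeff d \<nu> i = (2 + real i * \<nu>) / rho_d d"

fun cf_trunc :: "(nat \<Rightarrow> real) \<Rightarrow> nat \<Rightarrow> nat \<Rightarrow> real" where
  "cf_trunc a 0 k = 0"
| "cf_trunc a (Suc n) k = 1 / (a k - cf_trunc a n (Suc k))"

definition Delta :: "nat \<Rightarrow> real \<Rightarrow> real" where
  "Delta d \<nu> = lim (\<lambda>n. cf_trunc (cf_coeff d \<nu>) n 1)"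

definition theta :: "nat \<Rightarrow> real \<Rightarrow> real" where
  "theta d \<nu> = 1 - Delta d \<nu> / beta_d d"

end

theory Submission
  imports Defs
begin

definition Dl :: "(nat \<Rightarrow> real) \<Rightarrow> nat \<Rightarrow> real" where
  "Dl a k = lim (\<lambda>n. cf_trunc a n k)"

locale cfb =
  fixes c r :: real and a :: "nat \<Rightarrow> real"
  assumes r0: "0 \<le> r" and rc: "r < c" and rr: "1 \<le> r*(c-r)" and ac: "\<And>k. c \<le> a k"
begin

lemma bounds: "0 \<le> cf_trunc a n k \<and> cf_trunc a n k \<le> r"
proof (induction n arbitrary: k)
  case 0 show ?case using r0 by simp
next
  case (Suc n)
  define t where "t = cf_trunc a n (Suc k)"
  have t: "0 \<le> t" "t \<le> r" using Suc t_def by auto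
  have cr: "0 < c - r" using rc by simp
  have pos: "c - r \<le> a k - t" using ac[of k] t by simp
  have "1/(a k - t) \<le> 1/(c-r)" using pos cr by (simp add: frac_le)
  also have "1/(c-r) \<le> r" using rr cr by (simp add: pos_divide_le_eq mult.commute)
  finally show ?case using pos cr by (simp add: t_def[symmetric])
qed

lemma denom: "c - r \<le> a k - cf_trunc a n j" "0 < a k - cf_trunc a n j"
  using bounds[of n j] ac[of k] rc by auto

lemma mono_n: "cf_trunc a n k \<le> cf_trunc a (Suc n) k"
proof (induction n arbitrary: k)
  case 0 show ?case using denom[of k 0 "Suc k"] by simp
next
  case (Suc n)
  have "1/(a k - cf_trunc a n (Suc k)) \<le> 1/(a k - cf_trunc a (Suc n) (Suc k))"
    using denom[of k "Suc n" "Suc k"] Suc[of "Suc k"] by (simp add: frac_le)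
  then show ?case by simp
qed

lemma incseq: "incseq (\<lambda>n. cf_trunc a n k)"
  by (rule incseq_SucI) (rule mono_n)

lemma conv: "(\<lambda>n. cf_trunc a n k) \<longlonglongrightarrow> Dl a k"
proof -
  have "bdd_above (range (\<lambda>n. cf_trunc a n k))" using bounds by (intro bdd_aboveI2[where M=r]) auto
  then have "convergent (\<lambda>n. cf_trunc a n k)"
    using incseq LIMSEQ_incseq_SUP convergent_def by blast
  then show ?thesis unfolding Dl_def by (simp add: convergent_LIMSEQ_iff)
qed

lemma D_bounds: "0 \<le> Dl a k" "Dl a k \<le> r"
  using conv[of k] bounds
  by (auto intro: LIMSEQ_le_const LIMSEQ_le_const2)

lemma T_le_D: "cf_trunc a n k \<le> Dl a k"
  using incseq conv by (rule incseq_le)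

lemma D_rec: "Dl a k = 1 / (a k - Dl a (Suc k))"
proof -
  have "(\<lambda>n. cf_trunc a (Suc n) k) \<longlonglongrightarrow> Dl a k"
    using conv[of k] by (rule LIMSEQ_Suc)
  moreover have "(\<lambda>n. cf_trunc a (Suc n) k) \<longlonglongrightarrow> 1 / (a k - Dl a (Suc k))"
    unfolding cf_trunc.simps
    using D_bounds[of "Suc k"] ac[of k] rc
    by (intro tendsto_intros conv) auto
  ultimately show ?thesis using LIMSEQ_unique by blast
qed

lemma D_denom: "c - r \<le> a k - Dl a (Suc k)" "0 < a k - Dl a (Suc k)"
  using D_bounds[of "Suc k"] ac[of k] rc by auto

lemma D_pos: "0 < Dl a k"
  using D_rec[of k] D_denom[of k] by simp

end

lemma cf_compare:
  assumes "cfb c r a" and ab: "\<And>k. a k \<le> b k"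
  shows "cf_trunc b n k \<le> cf_trunc a n k"
proof -
  interpret A: cfb c r a by fact
  interpret B: cfb c r b using assms(1) ab unfolding cfb_def by (meson order_trans)
  show ?thesis
  proof (induction n arbitrary: k)
    case 0 then show ?case by simp
  next
    case (Suc n)
    have "1/(b k - cf_trunc b n (Suc k)) \<le> 1/(a k - cf_trunc a n (Suc k))"
      using A.denom[of k n "Suc k"] Suc[of "Suc k"] ab[of k] by (simp add: frac_le)
    then show ?case by simp
  qed
qed

lemma D_compare:
  assumes "cfb c r a" and ab: "\<And>k. a k \<le> b k"
  shows "Dl b k \<le> Dl a k"
proof -
  interpret A: cfb c r a by fact
  interpret B: cfb c r b using assms(1) ab unfolding cfb_def by (meson order_trans)
  show ?thesis using cf_compare[OF assms] by (intro LIMSEQ_le[OF B.conv A.conv]) auto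
qed

lemma D_compare_strict:
  assumes "cfb c r a" and ab: "\<And>k. a k \<le> b k" and s: "a k < b k"
  shows "Dl b k < Dl a k"
proof -
  interpret A: cfb c r a by fact
  interpret B: cfb c r b using assms(1) ab unfolding cfb_def by (meson order_trans)
  have "Dl b (Suc k) \<le> Dl a (Suc k)" by (rule D_compare[OF assms(1,2)])
  then have "a k - Dl a (Suc k) < b k - Dl b (Suc k)" using s by simp
  then show ?thesis using A.D_rec[of k] B.D_rec[of k] A.D_denom[of k]
    by (simp add: frac_less2)
qed


lemma sq_s: "(d::nat) \<ge> 3 \<Longrightarrow> sqrt (real d - 1) > 1 \<and> (sqrt (real d - 1))^2 = real d - 1"
  by auto

lemma rho_eq: "rho_d d = 2 * sqrt (real d - 1) / real d" by (simp add: rho_d_def)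

lemma inst:
  assumes d: "d \<ge> 3" and nu: "\<nu> \<ge> 0"
  shows "cfb (real d / sqrt (real d - 1)) (1 / sqrt (real d - 1)) (cf_coeff d \<nu>)"
proof -
  define s where "s = sqrt (real d - 1)"
  have s1: "s > 1" and s2: "s^2 = real d - 1" using sq_s[OF d] s_def by auto
  have dpos: "real d > 0" using d by simp
  show ?thesis unfolding s_def[symmetric]
  proof
    show "0 \<le> 1/s" using s1 by simp
    show "1/s < real d / s" using s1 d by (simp add: divide_strict_right_mono)
    have "1/s * (real d / s - 1/s) = (real d - 1) / s^2"
      using s1 by (simp add: field_simps power2_eq_square)
    then show "1 \<le> 1/s * (real d / s - 1/s)" using s2 s1 d by (simp del: of_nat_diff)
    fix k
    have "cf_coeff d \<nu> k = (2 + real k * \<nu>) * real d / (2 * s)"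
      unfolding cf_coeff_def rho_d_def s_def using dpos by (simp add: field_simps)
    moreover have "real d / s = 2 * real d / (2 * s)" by simp
    moreover have "2 * real d \<le> (2 + real k * \<nu>) * real d" using nu dpos by simp
    ultimately show "real d / s \<le> cf_coeff d \<nu> k" using s1
      by (metis divide_right_mono less_eq_real_def mult_pos_pos zero_less_one zero_less_numeral less_trans)
  qed
qed

lemma Delta_Dl: "Delta d \<nu> = Dl (cf_coeff d \<nu>) 1"
  unfolding Delta_def Dl_def ..

lemma const_trunc: "(\<And>k. a k = a 0) \<Longrightarrow> cf_trunc a n k = cf_trunc a n j"
  by (induction n arbitrary: k j) (simp_all, metis)

lemma Delta0:
  assumes d: "d \<ge> 3"
  shows "Delta d 0 = 1 / sqrt (real d - 1)"
proof -
  define s where "s = sqrt (real d - 1)"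
  have s1: "s > 1" and s2: "s^2 = real d - 1" using sq_s[OF d] s_def by auto
  interpret cfb "real d / s" "1/s" "cf_coeff d 0" using inst[OF d, of 0] s_def by simp
  define x where "x = Dl (cf_coeff d 0) 1"
  have "Dl (cf_coeff d 0) 2 = x" unfolding x_def Dl_def
  proof -
    have "\<And>n. cf_trunc (cf_coeff d 0) n 2 = cf_trunc (cf_coeff d 0) n 1"
      using const_trunc[of "cf_coeff d 0"] by (simp add: cf_coeff_def)
    then show "lim (\<lambda>n. cf_trunc (cf_coeff d 0) n 2) = lim (\<lambda>n. cf_trunc (cf_coeff d 0) n 1)" by simp
  qed
  moreover have "cf_coeff d 0 1 = real d / s" unfolding cf_coeff_def rho_d_def s_def by simp
  ultimately have xe: "x = 1 / (real d/s - x)" using D_rec[of 1] x_def by (simp add: numeral_2_eq_2)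
  have xb: "x \<le> 1/s" "0 < real d/s - x" using D_bounds[of 1] rc x_def by auto
  have "x * (real d/s - x) = 1" using xe xb by (simp add: field_simps)
  then have "(x - 1/s) * (x - s) = 0"
  proof -
    have dd: "real d = 1 + s * s" using s2 d by (simp add: power2_eq_square)
    show ?thesis using \<open>x * (real d/s - x) = 1\<close> s1
      by (simp add: field_simps power2_eq_square) (simp add: dd algebra_simps)
  qed
  moreover have "x - s < 0" using xb s1 by (smt (verit) divide_less_eq_1_pos)
  ultimately have "x = 1/s" by simp
  then show ?thesis using Delta_Dl x_def s_def by simp
qed


lemma s_facts: "(d::nat) \<ge> 3 \<Longrightarrow> beta_d d = sqrt (real d - 1)" by (simp add: beta_d_def)

lemma rho_pos: "(d::nat) \<ge> 3 \<Longrightarrow> rho_d d > 0" by (simp add: rho_d_def)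

lemma coeff_mono_nu:
  assumes "d \<ge> 3" "\<nu>1 \<le> \<nu>2"
  shows "cf_coeff d \<nu>1 k \<le> cf_coeff d \<nu>2 k"
  unfolding cf_coeff_def using rho_pos[OF assms(1)] assms(2)
  by (intro divide_right_mono) (auto intro: mult_left_mono)

lemma coeff_strict_nu:
  assumes "d \<ge> 3" "\<nu>1 < \<nu>2"
  shows "cf_coeff d \<nu>1 1 < cf_coeff d \<nu>2 1"
  unfolding cf_coeff_def using rho_pos[OF assms(1)] assms(2)
  by (simp add: divide_strict_right_mono)

lemma theta_eq: "theta d \<nu> = 1 - Dl (cf_coeff d \<nu>) 1 / sqrt (real d - 1)"
  unfolding theta_def Delta_Dl beta_d_def ..

lemma part1: "d \<ge> 3 \<Longrightarrow> strict_mono_on {0..} (\<lambda>\<nu>. theta d \<nu>)"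
proof (rule strict_mono_onI)
  fix \<nu>1 \<nu>2 :: real
  assume d: "d \<ge> 3" and "\<nu>1 \<in> {0..}" "\<nu>2 \<in> {0..}" and lt: "\<nu>1 < \<nu>2"
  then have n1: "\<nu>1 \<ge> 0" by simp
  have "Dl (cf_coeff d \<nu>2) 1 < Dl (cf_coeff d \<nu>1) 1"
    using D_compare_strict[OF inst[OF d n1] coeff_mono_nu[OF d] coeff_strict_nu[OF d lt]] lt by simp
  moreover have "sqrt (real d - 1) > 0" using d by simp
  ultimately show "theta d \<nu>1 < theta d \<nu>2" unfolding theta_eq
    by (simp add: divide_strict_right_mono)
qed

lemma rho_mono:
  assumes "3 \<le> d1" "d1 \<le> d2"
  shows "rho_d d2 \<le> rho_d d1"
proof -
  have eq: "rho_d d = 2 * sqrt ((real d - 1) / (real d)^2)" if "d \<ge> 3" for d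
    unfolding rho_d_def using that by (simp add: real_sqrt_divide)
  have "(real d2 - 1) * (real d1)^2 \<le> (real d1 - 1) * (real d2)^2"
  proof -
    have a: "real d1 + real d2 \<le> real d1 * real d2"
    proof -
      have "real d1 - 1 \<ge> 2" "real d2 - 1 \<ge> 2" using assms by auto
      then have "(real d1 - 1) * (real d2 - 1) \<ge> 2 * 2" by (intro mult_mono) auto
      then show ?thesis by (simp add: algebra_simps)
    qed
    have "(real d2 - real d1) * (real d1 + real d2) \<le> (real d2 - real d1) * (real d1 * real d2)"
      using a assms by (intro mult_left_mono) auto
    then show ?thesis by (simp add: algebra_simps power2_eq_square)
  qed
  then have "(real d2 - 1) / (real d2)^2 \<le> (real d1 - 1) / (real d1)^2"
    using assms by (simp add: divide_simps)
  then show ?thesis using assms eq by simp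
qed

lemma coeff_mono_d:
  assumes "3 \<le> d1" "d1 \<le> d2" "\<nu> \<ge> 0"
  shows "cf_coeff d1 \<nu> k \<le> cf_coeff d2 \<nu> k"
  unfolding cf_coeff_def using rho_mono[OF assms(1,2)] rho_pos[of d2] assms
  by (intro divide_left_mono) auto

lemma part2: "\<nu> > 0 \<Longrightarrow> strict_mono_on {3..} (\<lambda>d::nat. theta d \<nu>)"
proof (rule strict_mono_onI)
  fix d1 d2 :: nat
  assume nu: "\<nu> > 0" and "d1 \<in> {3..}" "d2 \<in> {3..}" and lt: "d1 < d2"
  then have d1: "d1 \<ge> 3" and d2: "d2 \<ge> 3" by auto
  interpret B: cfb "real d2 / sqrt (real d2 - 1)" "1 / sqrt (real d2 - 1)" "cf_coeff d2 \<nu>"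
    using inst[OF d2] nu by simp
  have le: "Dl (cf_coeff d2 \<nu>) 1 \<le> Dl (cf_coeff d1 \<nu>) 1"
    using D_compare[OF inst[OF d1] coeff_mono_d[OF d1]] lt nu by simp
  have pos: "Dl (cf_coeff d2 \<nu>) 1 > 0" by (rule B.D_pos)
  have s: "0 < sqrt (real d1 - 1)" "sqrt (real d1 - 1) < sqrt (real d2 - 1)" using d1 lt by auto
  have "Dl (cf_coeff d2 \<nu>) 1 / sqrt (real d2 - 1) < Dl (cf_coeff d2 \<nu>) 1 / sqrt (real d1 - 1)"
    using pos s by (simp add: divide_strict_left_mono)
  also have "\<dots> \<le> Dl (cf_coeff d1 \<nu>) 1 / sqrt (real d1 - 1)"
    using le s by (simp add: divide_right_mono)
  finally show "theta d1 \<nu> < theta d2 \<nu>" unfolding theta_eq by simp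
qed


lemma trunc_cont:
  assumes d: "d \<ge> 3"
  shows "((\<lambda>\<nu>. cf_trunc (cf_coeff d \<nu>) n k) \<longlongrightarrow> cf_trunc (cf_coeff d 0) n k) (at_right 0)"
proof (induction n arbitrary: k)
  case 0 then show ?case by simp
next
  case (Suc n)
  interpret Z: cfb "real d / sqrt (real d - 1)" "1 / sqrt (real d - 1)" "cf_coeff d 0"
    using inst[OF d] by simp
  have c: "((\<lambda>\<nu>. cf_coeff d \<nu> k) \<longlongrightarrow> cf_coeff d 0 k) (at_right 0)"
  proof -
    have "((\<lambda>\<nu>. (2 + real k * \<nu>) / rho_d d) \<longlongrightarrow> (2 + real k * 0) / rho_d d) (at_right 0)"
      using rho_pos[OF d] by (intro tendsto_intros) auto
    then show ?thesis unfolding cf_coeff_def using rho_pos[OF d] by simp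
  qed
  have "((\<lambda>\<nu>. 1 / (cf_coeff d \<nu> k - cf_trunc (cf_coeff d \<nu>) n (Suc k))) \<longlongrightarrow>
        1 / (cf_coeff d 0 k - cf_trunc (cf_coeff d 0) n (Suc k))) (at_right 0)"
    using Z.denom(2)[of k n "Suc k"]
    by (intro tendsto_intros c Suc) auto
  then show ?case by simp
qed

lemma lim0:
  assumes d: "d \<ge> 3"
  shows "((\<lambda>\<nu>. Delta d \<nu>) \<longlongrightarrow> 1 / sqrt (real d - 1)) (at_right 0)"
proof (rule order_tendstoI)
  fix y assume y: "y > 1 / sqrt (real d - 1)"
  show "\<forall>\<^sub>F \<nu> in at_right 0. Delta d \<nu> < y"
    using eventually_at_right_less[of "0::real"]
  proof (rule eventually_mono)
    fix \<nu> :: real assume "0 < \<nu>"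
    then interpret cfb "real d / sqrt (real d - 1)" "1 / sqrt (real d - 1)" "cf_coeff d \<nu>"
      using inst[OF d] by simp
    show "Delta d \<nu> < y" using D_bounds(2)[of 1] y Delta_Dl by simp
  qed
next
  fix y assume y: "y < 1 / sqrt (real d - 1)"
  interpret Z: cfb "real d / sqrt (real d - 1)" "1 / sqrt (real d - 1)" "cf_coeff d 0"
    using inst[OF d] by simp
  have "\<forall>\<^sub>F n in sequentially. y < cf_trunc (cf_coeff d 0) n 1"
    using order_tendstoD(1)[OF Z.conv[of 1]] y Delta0[OF d] Delta_Dl by simp
  then obtain n where n: "y < cf_trunc (cf_coeff d 0) n 1"
    by (meson eventually_sequentially order_refl)
  have "\<forall>\<^sub>F \<nu> in at_right 0. y < cf_trunc (cf_coeff d \<nu>) n 1"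
    using order_tendstoD(1)[OF trunc_cont[OF d] n] .
  then show "\<forall>\<^sub>F \<nu> in at_right 0. y < Delta d \<nu>"
    using eventually_at_right_less[of "0::real"]
  proof (rule eventually_elim2)
    fix \<nu> :: real assume "0 < \<nu>" and yn: "y < cf_trunc (cf_coeff d \<nu>) n 1"
    then interpret cfb "real d / sqrt (real d - 1)" "1 / sqrt (real d - 1)" "cf_coeff d \<nu>"
      using inst[OF d] by simp
    show "y < Delta d \<nu>" using T_le_D[of n 1] yn Delta_Dl by simp
  qed
qed

lemma limtop:
  assumes d: "d \<ge> 3"
  shows "((\<lambda>\<nu>. Delta d \<nu>) \<longlongrightarrow> 0) at_top"
proof (rule tendsto_sandwich)
  show "((\<lambda>\<nu>. 0) \<longlongrightarrow> (0::real)) at_top" by simp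
  show "((\<lambda>\<nu>. rho_d d / \<nu>) \<longlongrightarrow> 0) at_top"
    by (intro tendsto_divide_0[OF tendsto_const] filterlim_at_top_imp_at_infinity filterlim_ident)
  show "\<forall>\<^sub>F \<nu> in at_top. 0 \<le> Delta d \<nu>"
    using eventually_gt_at_top[of "0::real"]
  proof (rule eventually_mono)
    fix \<nu> :: real assume "0 < \<nu>"
    then interpret cfb "real d / sqrt (real d - 1)" "1 / sqrt (real d - 1)" "cf_coeff d \<nu>"
      using inst[OF d] by simp
    show "0 \<le> Delta d \<nu>" using D_bounds(1)[of 1] Delta_Dl by simp
  qed
  show "\<forall>\<^sub>F \<nu> in at_top. Delta d \<nu> \<le> rho_d d / \<nu>"
    using eventually_gt_at_top[of "0::real"]
  proof (rule eventually_mono)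
    fix \<nu> :: real assume nu: "0 < \<nu>"
    then interpret cfb "real d / sqrt (real d - 1)" "1 / sqrt (real d - 1)" "cf_coeff d \<nu>"
      using inst[OF d] by simp
    have rp: "rho_d d > 0" using rho_pos[OF d] .
    have c2: "2 / rho_d d = real d / sqrt (real d - 1)" unfolding rho_d_def using d by simp
    have "cf_coeff d \<nu> 1 = 2 / rho_d d + \<nu> / rho_d d" unfolding cf_coeff_def by (simp add: add_divide_distrib)
    then have "\<nu> / rho_d d \<le> cf_coeff d \<nu> 1 - Dl (cf_coeff d \<nu>) (Suc 1)"
      using D_bounds(2)[of "Suc 1"] rc c2 by simp
    moreover have "0 < \<nu> / rho_d d" using nu rp by simp
    ultimately have "1 / (cf_coeff d \<nu> 1 - Dl (cf_coeff d \<nu>) (Suc 1)) \<le> 1 / (\<nu> / rho_d d)"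
      by (intro frac_le) auto
    then show "Delta d \<nu> \<le> rho_d d / \<nu>" using D_rec[of 1] Delta_Dl by simp
  qed
qed

lemma limd:
  assumes nu: "\<nu> \<ge> 0"
  shows "((\<lambda>d::nat. Delta d \<nu> / beta_d d) \<longlonglongrightarrow> 0)"
proof (rule tendsto_sandwich)
  show "((\<lambda>d. 0) \<longlongrightarrow> (0::real)) sequentially" by simp
  show "((\<lambda>d::nat. 2 / real d) \<longlongrightarrow> 0) sequentially"
    by (rule lim_const_over_n)
  show "\<forall>\<^sub>F d in sequentially. 0 \<le> Delta d \<nu> / beta_d d"
    using eventually_ge_at_top[of "3::nat"]
  proof (rule eventually_mono)
    fix d :: nat assume d: "3 \<le> d"
    then interpret cfb "real d / sqrt (real d - 1)" "1 / sqrt (real d - 1)" "cf_coeff d \<nu>"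
      using inst[OF d nu] by simp
    show "0 \<le> Delta d \<nu> / beta_d d" using D_bounds(1)[of 1] Delta_Dl beta_d_def d by simp
  qed
  show "\<forall>\<^sub>F d in sequentially. Delta d \<nu> / beta_d d \<le> 2 / real d"
    using eventually_ge_at_top[of "3::nat"]
  proof (rule eventually_mono)
    fix d :: nat assume d: "3 \<le> d"
    then interpret cfb "real d / sqrt (real d - 1)" "1 / sqrt (real d - 1)" "cf_coeff d \<nu>"
      using inst[OF d nu] by simp
    have sp: "sqrt (real d - 1) > 0" using d by simp
    have "Delta d \<nu> / beta_d d \<le> (1 / sqrt (real d - 1)) / sqrt (real d - 1)"
      unfolding Delta_Dl beta_d_def using D_bounds(2)[of 1] sp by (intro divide_right_mono) auto
    also have "\<dots> = 1 / (real d - 1)" using d by (simp add: divide_divide_eq_left)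
    also have "\<dots> \<le> 2 / real d" using d by (simp add: field_simps)
    finally show "Delta d \<nu> / beta_d d \<le> 2 / real d" .
  qed
qed

theorem proposition2p7:
  shows "(\<forall>d::nat. d \<ge> 3 \<longrightarrow> strict_mono_on {0..} (\<lambda>\<nu>. theta d \<nu>))
    \<and> (\<forall>\<nu>::real. \<nu> > 0 \<longrightarrow> strict_mono_on {3..} (\<lambda>d::nat. theta d \<nu>))
    \<and> (\<forall>d::nat. d \<ge> 3 \<longrightarrow>
          theta d 0 = (real d - 2) / (real d - 1)
        \<and> ((\<lambda>\<nu>. theta d \<nu>) \<longlongrightarrow> (real d - 2) / (real d - 1)) (at_right 0)
        \<and> ((\<lambda>\<nu>. theta d \<nu>) \<longlongrightarrow> 1) at_top)
    \<and> (\<forall>\<nu>::real. \<nu> > 0 \<longrightarrow> ((\<lambda>d::nat. theta d \<nu>) \<longlongrightarrow> 1) sequentially)"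
proof (intro conjI allI impI)
  fix d :: nat assume d: "d \<ge> 3"
  show "strict_mono_on {0..} (\<lambda>\<nu>. theta d \<nu>)" using part1[OF d] .
  have val: "1 - (1 / sqrt (real d - 1)) / beta_d d = (real d - 2) / (real d - 1)"
    using d unfolding beta_d_def by (simp add: divide_divide_eq_left field_simps)
  show "theta d 0 = (real d - 2) / (real d - 1)"
    unfolding theta_def Delta0[OF d] val ..
  have "((\<lambda>\<nu>. 1 - Delta d \<nu> / beta_d d) \<longlongrightarrow> 1 - (1 / sqrt (real d - 1)) / beta_d d) (at_right 0)"
    using d by (intro tendsto_intros lim0[OF d]) (simp add: beta_d_def)
  then show "((\<lambda>\<nu>. theta d \<nu>) \<longlongrightarrow> (real d - 2) / (real d - 1)) (at_right 0)"
    unfolding theta_def val .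
  have "((\<lambda>\<nu>. 1 - Delta d \<nu> / beta_d d) \<longlongrightarrow> 1 - 0 / beta_d d) at_top"
    using d by (intro tendsto_intros limtop[OF d]) (simp add: beta_d_def)
  then show "((\<lambda>\<nu>. theta d \<nu>) \<longlongrightarrow> 1) at_top" unfolding theta_def by simp
next
  fix \<nu> :: real assume nu: "\<nu> > 0"
  show "strict_mono_on {3..} (\<lambda>d::nat. theta d \<nu>)" using part2[OF nu] .
  have "((\<lambda>d::nat. 1 - Delta d \<nu> / beta_d d) \<longlongrightarrow> 1 - 0) sequentially"
    using nu by (intro tendsto_intros limd) simp
  then show "((\<lambda>d::nat. theta d \<nu>) \<longlongrightarrow> 1) sequentially" unfolding theta_def by simp
qed

end
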